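(* Let $A\in\mathbb R^{n\times n}$ be symmetric with $A\not\succeq0$, $a,x_0,b_1,\ldots,b_p\in\mathbb R^n$, $u,\beta_1,\ldots,\beta_p\in\mathbb R$. Consider \[ ({\rm ETRS})\quad \min_{x\in\mathbb R^n}\ x^TAx+a^Tx\quad\text{s.t.}\quad \|x-x_0\|^2\le u,\quad b_i^Tx\le\beta_i,\ i=1,\ldots,p. \] Suppose \[ \dim\Big({\rm span}\big(\{b_1,\ldots,b_p\}\cup\mathcal R(A-\lambda_{\min}(A)I_n)\big)\Big)\le n-1. \] Then (ETRS) is equivalent to (in particular has the same optimal value as) the convex problem \[ \min_{x}\ x^T(A-\lambda_{\min}(A)I_n)x+a^Tx+\lambda_{\min}(A)(u+2x^Tx_0-\|x_0\|^2)\quad\text{s.t.}\quad \|x-x_0\|^2\le u,\quad b_i^Tx\le\beta_i,\ i=1,\ldots,p. \]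
   Context: $\lambda_{\min}(A)$ is the smallest eigenvalue of $A$; $\mathcal R(\cdot)$ denotes the range of a matrix; $I_n$ is the identity; $\|\cdot\|$ is the Euclidean norm. *)

theory Defs
  imports "HOL-Analysis.Analysis"
begin

definition psd :: "real^'n^'n \<Rightarrow> bool" where
  "psd A \<longleftrightarrow> (\<forall>x. 0 \<le> x \<bullet> (A *v x))"

definition mat_eigenvalue :: "real^'n^'n \<Rightarrow> real \<Rightarrow> bool" where
  "mat_eigenvalue A l \<longleftrightarrow> (\<exists>v. v \<noteq> 0 \<and> A *v v = l *\<^sub>R v)"

definition lambda_min :: "real^'n^'n \<Rightarrow> real" where
  "lambda_min A = Min {l. mat_eigenvalue A l}"

end

theory Submission
  imports Defs
begin

lemma sym_dot:
  fixes A :: "real^'n^'n"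
  assumes "transpose A = A"
  shows "x \<bullet> (A *v y) = (A *v x) \<bullet> y"
  by (metis assms dot_lmul_matrix transpose_matrix_vector)

lemma scale_quad:
  fixes A :: "real^'n^'n"
  shows "(c *\<^sub>R z) \<bullet> (A *v (c *\<^sub>R z)) = c^2 * (z \<bullet> (A *v z))"
  by (simp add: matrix_vector_mult_scaleR power2_eq_square)

lemma eig_finite:
  fixes A :: "real^'n^'n"
  assumes symA: "transpose A = A"
  shows "finite {l. mat_eigenvalue A l}"
proof -
  define S where "S = {l. mat_eigenvalue A l}"
  define ev where "ev l = (SOME v. v \<noteq> 0 \<and> A *v v = l *\<^sub>R v)" for l
  have ev: "ev l \<noteq> 0 \<and> A *v ev l = l *\<^sub>R ev l" if "l \<in> S" for l
  proof -
    from that obtain v where "v \<noteq> 0 \<and> A *v v = l *\<^sub>R v" unfolding S_def mat_eigenvalue_def by auto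
    then show ?thesis unfolding ev_def by (rule someI)
  qed
  have orth: "ev l \<bullet> ev k = 0" if "l \<in> S" "k \<in> S" "l \<noteq> k" for l k
  proof -
    have "l * (ev l \<bullet> ev k) = (A *v ev l) \<bullet> ev k" using ev[OF that(1)] by simp
    also have "\<dots> = ev l \<bullet> (A *v ev k)" using sym_dot[OF symA] by simp
    also have "\<dots> = k * (ev l \<bullet> ev k)" using ev[OF that(2)] by simp
    finally show ?thesis using that(3) by simp
  qed
  have inj: "inj_on ev S"
  proof (rule inj_onI)
    fix l k assume "l \<in> S" "k \<in> S" "ev l = ev k"
    then show "l = k" using orth[of l k] ev[of l] by (metis inner_eq_zero_iff)
  qed
  have "pairwise orthogonal (ev ` S)"
    unfolding pairwise_def orthogonal_def using orth by auto
  moreover have "0 \<notin> ev ` S" using ev by auto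
  ultimately have "independent (ev ` S)" by (rule pairwise_orthogonal_independent)
  then have "finite (ev ` S)" by (rule finiteI_independent)
  then show ?thesis using inj finite_imageD S_def by blast
qed

lemma neg_eig:
  fixes A :: "real^'n^'n"
  assumes symA: "transpose A = A" and np: "\<not> psd A"
  shows "\<exists>m. m < 0 \<and> mat_eigenvalue A m"
proof -
  define q where "q x = x \<bullet> (A *v x)" for x :: "real^'n"
  have cont: "continuous_on (sphere 0 1) q"
    unfolding q_def by (intro continuous_intros bounded_linear.continuous_on[OF matrix_vector_mul_bounded_linear])
  have ne: "sphere (0::real^'n) 1 \<noteq> {}" by simp
  obtain z where z: "z \<in> sphere (0::real^'n) 1" and zmin: "\<And>y. y \<in> sphere 0 1 \<Longrightarrow> q z \<le> q y"
    using continuous_attains_inf[OF compact_sphere _ cont] using ne by blast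
  define m where "m = q z"
  have ge: "q y \<ge> m * (y \<bullet> y)" for y
  proof (cases "y = 0")
    case True then show ?thesis by (simp add: q_def)
  next
    case False
    define y' where "y' = (1 / norm y) *\<^sub>R y"
    have "y' \<in> sphere 0 1" using False by (simp add: y'_def)
    then have "m \<le> q y'" using zmin m_def by auto
    also have "q y' = q y / (norm y)^2"
      unfolding q_def y'_def scale_quad by (simp add: power2_eq_square field_simps)
    finally have "m * (norm y)^2 \<le> q y" using False by (simp add: field_simps)
    then show ?thesis by (simp add: power2_norm_eq_inner)
  qed
  obtain x where "q x < 0" using np unfolding psd_def q_def by (auto simp: not_le)
  then have "x \<noteq> 0" by (auto simp: q_def)
  have "m < 0"
  proof -
    define x' where "x' = (1 / norm x) *\<^sub>R x"
    have "x' \<in> sphere 0 1" using \<open>x\<noteq>0\<close> by (simp add: x'_def)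
    then have "m \<le> q x'" using zmin m_def by auto
    also have "q x' = q x / (norm x)^2"
      unfolding q_def x'_def scale_quad by (simp add: power2_eq_square field_simps)
    also have "\<dots> < 0" using \<open>q x < 0\<close> \<open>x \<noteq> 0\<close> by (simp add: divide_neg_pos)
    finally show ?thesis .
  qed
  define B where "B = A - m *\<^sub>R mat 1"
  have Bv: "B *v y = A *v y - m *\<^sub>R y" for y
    by (simp add: B_def matrix_vector_mult_diff_rdistrib scaleR_matrix_vector_assoc[symmetric])
  have Bsym: "y \<bullet> (B *v w) = (B *v y) \<bullet> w" for y w
    using sym_dot[OF symA, of y w] by (simp add: Bv inner_diff_right inner_diff_left inner_commute)
  have Bpsd: "y \<bullet> (B *v y) \<ge> 0" for y
    using ge[of y] by (simp add: Bv q_def inner_diff_right)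
  have zz: "z \<bullet> z = 1" using z by (simp add: dot_square_norm)
  have Bz0: "z \<bullet> (B *v z) = 0" by (simp add: Bv inner_diff_right m_def q_def zz)
  have "B *v z = 0"
  proof -
    define w where "w = B *v z"
    have "0 \<le> (z - t *\<^sub>R w) \<bullet> (B *v (z - t *\<^sub>R w))" for t using Bpsd by blast
    also have "(z - t *\<^sub>R w) \<bullet> (B *v (z - t *\<^sub>R w))
       = z \<bullet> (B *v z) - 2 * t * (w \<bullet> w) + t^2 * (w \<bullet> (B *v w))" for t
      using Bsym[of z w] Bsym[of w z]
      by (simp add: matrix_vector_mult_diff_distrib matrix_vector_mult_scaleR inner_diff_left
          inner_diff_right w_def power2_eq_square inner_commute algebra_simps)
    finally have h: "0 \<le> - 2 * t * (w \<bullet> w) + t^2 * (w \<bullet> (B *v w))" for t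
      using Bz0 by simp
    show ?thesis
    proof (rule ccontr)
      assume "B *v z \<noteq> 0"
      then have ww: "w \<bullet> w > 0" by (simp add: w_def)
      define c where "c = w \<bullet> (B *v w)"
      have c0: "c \<ge> 0" using Bpsd c_def by simp
      define t where "t = (w \<bullet> w) / (c + 1)"
      have "0 \<le> - 2 * t * (w \<bullet> w) + t^2 * c" using h c_def by simp
      moreover have "t > 0" using ww c0 by (simp add: t_def)
      moreover have "t * c \<le> w \<bullet> w"
        using ww c0 unfolding t_def by (simp add: field_simps)
      ultimately have "0 \<le> t * (- 2 * (w \<bullet> w) + t * c)" by (simp add: power2_eq_square algebra_simps)
      with \<open>t > 0\<close> have "0 \<le> - 2 * (w \<bullet> w) + t * c" by (simp add: zero_le_mult_iff)
      with \<open>t * c \<le> w \<bullet> w\<close> ww show False by linarith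
    qed
  qed
  then have "A *v z = m *\<^sub>R z" by (simp add: Bv)
  moreover have "z \<noteq> 0" using z by auto
  ultimately show ?thesis using \<open>m < 0\<close> unfolding mat_eigenvalue_def by blast
qed


lemma quad_root:
  fixes al be ga s e t :: real
  assumes "al > 0" "s^2 = be^2 - al * ga" "e^2 = 1" "t = (- be + e * s) / al"
  shows "al * t^2 + 2 * be * t + ga = 0"
proof -
  have ta: "al * t = - be + e * s" using assms by simp
  have "al * (al * t^2 + 2 * be * t + ga) = (al*t)^2 + 2 * be * (al * t) + al * ga"
    by (simp add: power2_eq_square algebra_simps)
  also have "\<dots> = e^2 * s^2 - be^2 + al * ga" unfolding ta by (simp add: power2_eq_square algebra_simps)
  also have "\<dots> = 0" using assms by simp
  finally show ?thesis using assms(1) by simp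
qed

theorem corollary2:
  fixes A :: "real^'n^'n" and a x0 :: "real^'n" and u :: real
    and p :: nat and b :: "nat \<Rightarrow> real^'n" and beta :: "nat \<Rightarrow> real"
  assumes symA: "transpose A = A"
    and notpsd: "\<not> psd A"
    and dimcond: "dim (span (b ` {1..p} \<union> range (\<lambda>x. (A - lambda_min A *\<^sub>R mat 1) *v x)))
                  \<le> CARD('n) - 1"
  shows "(let F = {x. (norm (x - x0))\<^sup>2 \<le> u \<and> (\<forall>i\<in>{1..p}. b i \<bullet> x \<le> beta i)}
          in Inf ((\<lambda>x. x \<bullet> (A *v x) + a \<bullet> x) ` F)
           = Inf ((\<lambda>x. x \<bullet> ((A - lambda_min A *\<^sub>R mat 1) *v x) + a \<bullet> x
                  + lambda_min A * (u + 2 * (x \<bullet> x0) - (norm x0)\<^sup>2)) ` F))"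
proof -
  define lam where "lam = lambda_min A"
  define B where "B = A - lam *\<^sub>R mat 1"
  define F where "F = {x. (norm (x - x0))\<^sup>2 \<le> u \<and> (\<forall>i\<in>{1..p}. b i \<bullet> x \<le> beta i)}"
  define f where "f = (\<lambda>x. x \<bullet> (A *v x) + a \<bullet> x)"
  define g where "g = (\<lambda>x. x \<bullet> (B *v x) + a \<bullet> x + lam * (u + 2 * (x \<bullet> x0) - (norm x0)\<^sup>2))"
  have lamneg: "lam < 0"
  proof -
    obtain m where "m < 0" "mat_eigenvalue A m" using neg_eig[OF symA notpsd] by blast
    then have "lam \<le> m" unfolding lam_def lambda_min_def
      using eig_finite[OF symA] by (intro Min_le) auto
    with \<open>m < 0\<close> show ?thesis by simp
  qed
  have Bv: "B *v y = A *v y - lam *\<^sub>R y" for y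
    by (simp add: B_def matrix_vector_mult_diff_rdistrib scaleR_matrix_vector_assoc[symmetric])
  have Bsym: "y \<bullet> (B *v w) = (B *v y) \<bullet> w" for y w
    using sym_dot[OF symA, of y w] by (simp add: Bv inner_diff_right inner_diff_left inner_commute)
  define W where "W = b ` {1..p} \<union> range (\<lambda>x. B *v x)"
  have "dim W < DIM(real^'n)"
  proof -
    have "CARD('n) > 0" by simp
    then show ?thesis using dimcond unfolding W_def B_def lam_def by (simp, linarith)
  qed
  then obtain v where v0: "v \<noteq> 0" and vo: "\<And>y. y \<in> span W \<Longrightarrow> orthogonal v y"
    using orthogonal_to_subspace_exists by blast
  have vb: "b i \<bullet> v = 0" if "i \<in> {1..p}" for i
    using vo[of "b i"] that span_base[of "b i" W] unfolding W_def orthogonal_def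
    by (auto simp: inner_commute)
  have vB: "v \<bullet> (B *v w) = 0" for w
    using vo[of "B *v w"] span_base[of "B *v w" W] unfolding W_def orthogonal_def by auto
  have Bv0: "B *v v = 0"
    using vB[of "B *v v"] Bsym[of v "B *v v"] by simp
  have fg: "f x = g x + lam * ((norm (x - x0))^2 - u)" for x
    unfolding f_def g_def Bv
    by (simp add: power2_norm_eq_inner inner_diff_left inner_diff_right algebra_simps inner_commute)
  have gle: "g x \<le> f x" if "x \<in> F" for x
  proof -
    have "(norm (x - x0))^2 - u \<le> 0" using that F_def by simp
    then have "lam * ((norm (x - x0))^2 - u) \<ge> 0" using lamneg by (simp add: mult_nonpos_nonpos)
    then show ?thesis using fg[of x] by simp
  qed
  have key: "\<exists>y\<in>F. f y \<le> g x" if xF: "x \<in> F" for x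
  proof -
    define al where "al = v \<bullet> v"
    define be where "be = v \<bullet> (x - x0)"
    define ga where "ga = (norm (x - x0))^2 - u"
    define s where "s = sqrt (be^2 - al * ga)"
    define c where "c = a \<bullet> v + 2 * lam * (v \<bullet> x0)"
    define e :: real where "e = (if c \<ge> 0 then -1 else 1)"
    define t where "t = (- be + e * s) / al"
    have al0: "al > 0" using v0 unfolding al_def by simp
    have ga0: "ga \<le> 0" using xF unfolding F_def ga_def by simp
    have "al * ga \<le> 0" using mult_nonneg_nonpos[of al ga] al0 ga0 by linarith
    then have D: "be^2 - al * ga \<ge> be^2" by linarith
    have "be^2 \<ge> 0" by (rule zero_le_power2)
    then have s2: "s^2 = be^2 - al * ga" unfolding s_def
      using D real_sqrt_pow2[of "be^2 - al * ga"] by linarith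
    have sabs: "s \<ge> \<bar>be\<bar>" unfolding s_def
      using real_sqrt_le_mono[OF D] by simp
    have e2: "e^2 = 1" by (simp add: e_def)
    have tc: "t * c \<le> 0"
    proof (cases "c \<ge> 0")
      case True
      then have "t \<le> 0" using sabs al0 by (simp add: t_def e_def divide_nonpos_pos)
      then show ?thesis using True by (simp add: mult_nonpos_nonneg)
    next
      case False
      then have "t \<ge> 0" using sabs al0 by (simp add: t_def e_def)
      then show ?thesis using False by (simp add: mult_nonneg_nonpos)
    qed
    have root: "al * t^2 + 2 * be * t + ga = 0"
      by (rule quad_root[OF al0 s2 e2 t_def])
    define y where "y = x + t *\<^sub>R v"
    have yx: "y - x0 = (x - x0) + t *\<^sub>R v" by (simp add: y_def)
    have ny: "(norm (y - x0))^2 = al * t^2 + 2 * be * t + (norm (x - x0))^2"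
    proof -
      have "(norm (y - x0))^2 = ((x - x0) + t *\<^sub>R v) \<bullet> ((x - x0) + t *\<^sub>R v)"
        unfolding power2_norm_eq_inner yx ..
      also have "\<dots> = (x - x0) \<bullet> (x - x0) + 2 * t * (v \<bullet> (x - x0)) + t^2 * (v \<bullet> v)"
        by (simp add: inner_add_left inner_add_right inner_commute power2_eq_square)
      finally show ?thesis unfolding al_def be_def power2_norm_eq_inner by simp
    qed
    then have ny2: "(norm (y - x0))^2 - u = 0" using root by (simp add: ga_def)
    have "b i \<bullet> y \<le> beta i" if "i \<in> {1..p}" for i
    proof -
      have "b i \<bullet> y = b i \<bullet> x" using vb[OF that] by (simp add: y_def inner_add_right)
      then show ?thesis using xF that by (simp add: F_def)
    qed
    then have yF: "y \<in> F" using ny2 unfolding F_def by simp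
    have gy: "g y = g x + t * c"
    proof -
      have "B *v y = B *v x" by (simp add: y_def matrix_vector_right_distrib matrix_vector_mult_scaleR Bv0)
      moreover have "v \<bullet> (B *v x) = 0" by (rule vB)
      ultimately show ?thesis unfolding g_def c_def
        by (simp add: y_def inner_add_left inner_add_right algebra_simps inner_commute Bv0)
    qed
    have "f y = g y" using fg[of y] ny2 by simp
    with gy tc yF show ?thesis by force
  qed
  have cont: "continuous_on UNIV h" if "h = f \<or> h = g" for h
    using that unfolding f_def g_def
    by (auto intro!: continuous_intros bounded_linear.continuous_on[OF matrix_vector_mul_bounded_linear])
  have closedF: "closed F"
  proof -
    have "F = {x. (norm (x - x0))\<^sup>2 \<le> u} \<inter> (\<Inter>i\<in>{1..p}. {x. b i \<bullet> x \<le> beta i})"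
      unfolding F_def by auto
    moreover have "closed {x. (norm (x - x0))\<^sup>2 \<le> u}"
      by (intro closed_Collect_le continuous_intros)
    moreover have "closed {x. b i \<bullet> x \<le> beta i}" for i
      by (intro closed_Collect_le continuous_intros)
    ultimately show ?thesis by (auto intro!: closed_INT)
  qed
  have boundedF: "bounded F"
  proof (rule bounded_subset[OF bounded_cball[of x0 "sqrt u"]])
    show "F \<subseteq> cball x0 (sqrt u)"
      unfolding F_def by (auto simp: dist_norm norm_minus_commute intro: real_le_rsqrt)
  qed
  have compF: "compact F" using closedF boundedF by (simp add: compact_eq_bounded_closed)
  have bdd: "bdd_below (h ` F)" if "h = f \<or> h = g" for h
    using compact_continuous_image[OF continuous_on_subset[OF cont[OF that]] compF]
    by (auto intro!: bounded_imp_bdd_below compact_imp_bounded)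
  have main: "Inf (f ` F) = Inf (g ` F)"
  proof (cases "F = {}")
    case True then show ?thesis by simp
  next
    case False
    show ?thesis
    proof (rule antisym)
      show "Inf (f ` F) \<le> Inf (g ` F)"
        using False bdd[of f] key by (intro cInf_mono) auto
      show "Inf (g ` F) \<le> Inf (f ` F)"
        using False bdd[of g] gle by (intro cInf_mono) auto
    qed
  qed
  then show ?thesis unfolding Let_def f_def g_def F_def B_def lam_def .
qed

end
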